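(* Let $q\in\mathscr{P}_2(\mathbb{R}^d)$ not give mass to small sets, and let $\psi:\mathbb{R}^d\to(-\infty,+\infty]$ be a proper, lower semicontinuous convex function. Define $\varphi^\psi(x)\coloneqq\inf_{p\in\mathscr{P}_2^x(\mathbb{R}^d)}\big(\int\psi\,dp-\mathrm{MCov}(p,q)\big)$ for $x\in\mathbb{R}^d$. Then: (i) the function $x\mapsto\varphi^\psi(x)$ is convex on $\operatorname{dom}\psi$; (ii) if $\varphi^\psi(x)>-\infty$ for some $x\in\operatorname{int}(\operatorname{dom}\psi)$, then $\varphi^\psi>-\infty$ on $\operatorname{int}(\operatorname{dom}\psi)$.
   Context: $\mathscr{P}_2(\mathbb{R}^d)$: Borel probability measures with finite second moment; $\mathscr{P}_2^x(\mathbb{R}^d)$: those with barycenter $\int y\,p(dy)=x$. $q$ does not give mass to small sets: $q(A)=0$ for measurable $A$ of Hausdorff dimension $\le d-1$. $\mathrm{MCov}(p,q)\coloneqq\sup_{\tilde\pi\in\mathsf{Cpl}(p,q)}\int\langle y,z\rangle\,d\tilde\pi$ over couplings. $\operatorname{dom}\psi=\{\psi<+\infty\}$; proper means $\operatorname{dom}\psi\neq\varnothing$. *)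

theory Defs
  imports "HOL-Probability.Probability"
begin

text \<open>Ambient space: R^d is modelled by a Euclidean space type 'a with d = DIM('a).\<close>

definition P2 :: "'a::euclidean_space measure set" where
  "P2 = {p. prob_space p \<and> sets p = sets borel \<and> integrable p (\<lambda>y. (norm y)^2)}"

definition P2x :: "'a::euclidean_space \<Rightarrow> 'a measure set" where
  "P2x x = {p \<in> P2. integrable p (\<lambda>y. y) \<and> (\<integral>y. y \<partial>p) = x}"

definition Cpl :: "'a::euclidean_space measure \<Rightarrow> 'a measure \<Rightarrow> ('a \<times> 'a) measure set" where
  "Cpl p q = {\<pi>. prob_space \<pi> \<and> sets \<pi> = sets (borel :: ('a \<times> 'a) measure)
                 \<and> distr \<pi> borel fst = p \<and> distr \<pi> borel snd = q}"

definition MCov :: "'a::euclidean_space measure \<Rightarrow> 'a measure \<Rightarrow> real" where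
  "MCov p q = Sup ((\<lambda>\<pi>. \<integral>yz. fst yz \<bullet> snd yz \<partial>\<pi>) ` Cpl p q)"

definition ext_integral :: "'a measure \<Rightarrow> ('a \<Rightarrow> ereal) \<Rightarrow> ereal" where
  "ext_integral M f = enn2ereal (\<integral>\<^sup>+x. e2ennreal (f x) \<partial>M) - enn2ereal (\<integral>\<^sup>+x. e2ennreal (- f x) \<partial>M)"

definition hausdorff_measure :: "real \<Rightarrow> 'a::euclidean_space set \<Rightarrow> ennreal" where
  "hausdorff_measure s A =
     (SUP \<delta>\<in>{0<..}. INF C\<in>{C :: nat \<Rightarrow> 'a set. A \<subseteq> (\<Union>i. C i) \<and> (\<forall>i. bounded (C i) \<and> diameter (C i) \<le> \<delta>)}.
        (\<Sum>i. ennreal (diameter (C i) powr s)))"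

definition hausdorff_dim :: "'a::euclidean_space set \<Rightarrow> ereal" where
  "hausdorff_dim A = Inf (ereal ` {s. s > 0 \<and> hausdorff_measure s A = 0})"

definition no_mass_small_sets :: "'a::euclidean_space measure \<Rightarrow> bool" where
  "no_mass_small_sets q \<longleftrightarrow>
     (\<forall>A \<in> sets borel. hausdorff_dim A \<le> ereal (real DIM('a) - 1) \<longrightarrow> emeasure q A = 0)"

definition ext_convex :: "('a::real_vector \<Rightarrow> ereal) \<Rightarrow> bool" where
  "ext_convex f \<longleftrightarrow> (\<forall>x y t. 0 < t \<and> t < 1 \<longrightarrow>
      f ((1 - t) *\<^sub>R x + t *\<^sub>R y) \<le> ereal (1 - t) * f x + ereal t * f y)"

definition ext_lsc :: "('a::topological_space \<Rightarrow> ereal) \<Rightarrow> bool" where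
  "ext_lsc f \<longleftrightarrow> (\<forall>x. f x \<le> Liminf (at x) f)"

definition edom :: "('a \<Rightarrow> ereal) \<Rightarrow> 'a set" where
  "edom f = {x. f x < \<infinity>}"

definition ext_convex_on :: "'a::real_vector set \<Rightarrow> ('a \<Rightarrow> ereal) \<Rightarrow> bool" where
  "ext_convex_on S f \<longleftrightarrow> convex S \<and> convex {(x, t::real). x \<in> S \<and> f x \<le> ereal t}"

definition phi :: "('a::euclidean_space \<Rightarrow> ereal) \<Rightarrow> 'a measure \<Rightarrow> 'a \<Rightarrow> ereal" where
  "phi \<psi> q x = (INF p\<in>P2x x. ext_integral p \<psi> - ereal (MCov p q))"

end

theory Submission
  imports Defs
begin

definition mixm :: "real \<Rightarrow> 'b measure \<Rightarrow> 'b measure \<Rightarrow> 'b measure" where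
  "mixm t M N = measure_pmf (bernoulli_pmf t) \<bind> (\<lambda>b. if b then N else M)"

locale mixloc =
  fixes M N :: "'b measure" and t :: real
  assumes M: "prob_space M" and N: "prob_space N" and sNM: "sets N = sets M"
    and t0: "0 \<le> t" and t1: "t \<le> 1"
begin

lemma kernel_meas: "(\<lambda>b. if b then N else M) \<in> measurable (measure_pmf (bernoulli_pmf t)) (subprob_algebra M)"
  using M N sNM by (auto simp: space_subprob_algebra prob_space_imp_subprob_space)

lemma sets_mix[simp]: "sets (mixm t M N) = sets M"
  unfolding mixm_def using sNM by (subst sets_bind) auto

lemma space_mix[simp]: "space (mixm t M N) = space M"
  using sets_mix by (rule sets_eq_imp_space_eq)

lemma emeasure_mix: "A \<in> sets M \<Longrightarrow> emeasure (mixm t M N) A = emeasure N A * t + emeasure M A * (1 - t)"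
  unfolding mixm_def using t0 t1
  by (subst emeasure_bind[OF _ kernel_meas]) auto

lemma nn_integral_mix: "f \<in> borel_measurable M \<Longrightarrow>
   (\<integral>\<^sup>+x. f x \<partial>mixm t M N) = (\<integral>\<^sup>+x. f x \<partial>N) * t + (\<integral>\<^sup>+x. f x \<partial>M) * (1 - t)"
  unfolding mixm_def using t0 t1
  by (subst nn_integral_bind[OF _ kernel_meas]) auto

lemma prob_mix: "prob_space (mixm t M N)"
proof (rule prob_spaceI)
  have "emeasure (mixm t M N) (space M) = 1"
    using emeasure_mix[of "space M"] prob_space.emeasure_space_1[OF M] prob_space.emeasure_space_1[OF N]
      sets_eq_imp_space_eq[OF sNM] t0 t1
    by (simp add: ennreal_plus[symmetric] del: ennreal_plus)
  then show "emeasure (mixm t M N) (space (mixm t M N)) = 1" by simp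
qed

end

lemma mix_same:
  assumes "prob_space M" "0 \<le> t" "t \<le> 1"
  shows "mixm t M M = M"
proof -
  interpret mixloc M M t using assms by (intro mixloc.intro) simp_all
  show ?thesis
  proof (rule measure_eqI)
    fix A assume "A \<in> sets (mixm t M M)"
    then have A: "A \<in> sets M" by simp
    have "ennreal t + ennreal (1 - t) = 1"
      using assms by (simp add: ennreal_plus[symmetric] del: ennreal_plus)
    then have "emeasure M A * ennreal t + emeasure M A * ennreal (1 - t) = emeasure M A"
      by (simp add: distrib_left[symmetric])
    then show "emeasure (mixm t M M) A = emeasure M A"
      using A by (simp add: emeasure_mix)
  qed (rule sets_mix)
qed

context mixloc begin

lemma integrable_mix:
  fixes f :: "'b \<Rightarrow> 'c::{banach, second_countable_topology}"
  assumes "integrable M f" "integrable N f"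
  shows "integrable (mixm t M N) f"
proof -
  have fm: "f \<in> borel_measurable M" using assms by auto
  have "(\<integral>\<^sup>+x. norm (f x) \<partial>M) < \<infinity>" "(\<integral>\<^sup>+x. norm (f x) \<partial>N) < \<infinity>"
    using assms by (simp_all add: integrable_iff_bounded)
  moreover have "(\<integral>\<^sup>+x. norm (f x) \<partial>mixm t M N) = (\<integral>\<^sup>+x. norm (f x) \<partial>N) * t + (\<integral>\<^sup>+x. norm (f x) \<partial>M) * (1 - t)"
    using fm by (intro nn_integral_mix) auto
  ultimately have "(\<integral>\<^sup>+x. norm (f x) \<partial>mixm t M N) < \<infinity>"
    by (simp add: ennreal_mult_less_top ennreal_add_less_top)
  moreover have "f \<in> borel_measurable (mixm t M N)"
    using fm by (simp add: measurable_cong_sets[OF sets_mix refl])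
  ultimately show ?thesis by (simp add: integrable_iff_bounded)
qed

lemma integral_mix:
  fixes f :: "'b \<Rightarrow> real"
  assumes "integrable M f" "integrable N f"
  shows "integral\<^sup>L (mixm t M N) f = integral\<^sup>L N f * t + integral\<^sup>L M f * (1 - t)"
proof -
  have fm: "f \<in> borel_measurable M" using assms by auto
  have fin: "(\<integral>\<^sup>+x. ennreal (f x) \<partial>M) < \<infinity>" "(\<integral>\<^sup>+x. ennreal (f x) \<partial>N) < \<infinity>"
     "(\<integral>\<^sup>+x. ennreal (- f x) \<partial>M) < \<infinity>" "(\<integral>\<^sup>+x. ennreal (- f x) \<partial>N) < \<infinity>"
    using assms by (auto simp: real_integrable_def top.not_eq_extremum)
  have e1: "(\<integral>\<^sup>+x. ennreal (f x) \<partial>mixm t M N) = (\<integral>\<^sup>+x. ennreal (f x) \<partial>N) * t + (\<integral>\<^sup>+x. ennreal (f x) \<partial>M) * (1 - t)"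
    using fm by (intro nn_integral_mix) auto
  have e2: "(\<integral>\<^sup>+x. ennreal (- f x) \<partial>mixm t M N) = (\<integral>\<^sup>+x. ennreal (- f x) \<partial>N) * t + (\<integral>\<^sup>+x. ennreal (- f x) \<partial>M) * (1 - t)"
    using fm by (intro nn_integral_mix) auto
  show ?thesis
    using t0 t1 fin
    unfolding real_lebesgue_integral_def[OF integrable_mix[OF assms]] real_lebesgue_integral_def[OF assms(1)]
      real_lebesgue_integral_def[OF assms(2)] e1 e2
    by (simp add: enn2real_plus ennreal_mult_less_top enn2real_mult algebra_simps)
qed

lemma distr_mix:
  assumes g: "g \<in> measurable M K"
  shows "distr (mixm t M N) K g = mixm t (distr M K g) (distr N K g)"
proof -
  have gN: "g \<in> measurable N K" using g by (simp add: measurable_cong_sets[OF sNM refl])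
  interpret D: mixloc "distr M K g" "distr N K g" t
    by (intro mixloc.intro) (simp_all add: M N g gN prob_space.prob_space_distr t0 t1)
  show ?thesis
  proof (rule measure_eqI)
    show "sets (distr (mixm t M N) K g) = sets (mixm t (distr M K g) (distr N K g))" by simp
    fix A assume "A \<in> sets (distr (mixm t M N) K g)"
    then have A: "A \<in> sets K" by simp
    have gm: "g \<in> measurable (mixm t M N) K" using g by (simp add: measurable_cong_sets[OF sets_mix refl])
    have "emeasure (distr (mixm t M N) K g) A = emeasure (mixm t M N) (g -` A \<inter> space M)"
      by (simp add: emeasure_distr[OF gm A])
    also have "\<dots> = emeasure N (g -` A \<inter> space M) * t + emeasure M (g -` A \<inter> space M) * (1 - t)"
      using g A by (intro emeasure_mix) auto
    also have "\<dots> = emeasure (mixm t (distr M K g) (distr N K g)) A"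
      using A by (simp add: D.emeasure_mix emeasure_distr[OF g A] emeasure_distr[OF gN A] sets_eq_imp_space_eq[OF sNM])
    finally show "emeasure (distr (mixm t M N) K g) A = emeasure (mixm t (distr M K g) (distr N K g)) A" .
  qed
qed

end

lemma mixlocI: "prob_space M \<Longrightarrow> prob_space N \<Longrightarrow> sets N = sets M \<Longrightarrow> 0 \<le> t \<Longrightarrow> t \<le> 1 \<Longrightarrow> mixloc M N t"
  by (intro mixloc.intro)

lemma mix_P2x:
  fixes x y :: "'a::euclidean_space"
  assumes p0: "p0 \<in> P2x x" and p1: "p1 \<in> P2x y" and t: "0 \<le> t" "t \<le> 1"
  shows "mixm t p0 p1 \<in> P2x ((1 - t) *\<^sub>R x + t *\<^sub>R y)"
proof -
  have P0: "prob_space p0" "sets p0 = sets borel" "integrable p0 (\<lambda>y. (norm y)^2)"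
    "integrable p0 (\<lambda>y. y)" "(\<integral>y. y \<partial>p0) = x"
    using p0 by (auto simp: P2x_def P2_def)
  have P1: "prob_space p1" "sets p1 = sets borel" "integrable p1 (\<lambda>y. (norm y)^2)"
    "integrable p1 (\<lambda>y. y)" "(\<integral>y. y \<partial>p1) = y"
    using p1 by (auto simp: P2x_def P2_def)
  interpret mixloc p0 p1 t using P0 P1 t by (intro mixlocI) simp_all
  have i1: "integrable (mixm t p0 p1) (\<lambda>y. y)"
    using P0 P1 by (intro integrable_mix) 
  have "(\<integral>y. y \<partial>mixm t p0 p1) = (1 - t) *\<^sub>R x + t *\<^sub>R y"
  proof (rule euclidean_eqI)
    fix b :: 'a assume b: "b \<in> Basis"
    have "(\<integral>y. y \<partial>mixm t p0 p1) \<bullet> b = (\<integral>z. z \<bullet> b \<partial>mixm t p0 p1)"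
      using i1 by simp
    also have "\<dots> = (\<integral>z. z \<bullet> b \<partial>p1) * t + (\<integral>z. z \<bullet> b \<partial>p0) * (1 - t)"
      using P0 P1 by (intro integral_mix) auto
    also have "\<dots> = ((1 - t) *\<^sub>R x + t *\<^sub>R y) \<bullet> b"
      using P0 P1 by (simp add: algebra_simps inner_add_left)
    finally show "(\<integral>y. y \<partial>mixm t p0 p1) \<bullet> b = ((1 - t) *\<^sub>R x + t *\<^sub>R y) \<bullet> b" .
  qed
  moreover have "integrable (mixm t p0 p1) (\<lambda>y. (norm y)^2)"
    using P0 P1 by (intro integrable_mix)
  ultimately show ?thesis
    using prob_mix i1 P0 by (simp add: P2x_def P2_def)
qed

lemma fst_meas: "fst \<in> borel_measurable (borel :: ('a::euclidean_space \<times> 'a) measure)"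
  by (intro borel_measurable_continuous_onI continuous_intros)
lemma snd_meas: "snd \<in> borel_measurable (borel :: ('a::euclidean_space \<times> 'a) measure)"
  by (intro borel_measurable_continuous_onI continuous_intros)

lemma ineq_aux: "\<bar>(a::'a::euclidean_space) \<bullet> b\<bar> \<le> ((norm a)^2 + (norm b)^2) / 2"
proof -
  have "\<bar>a \<bullet> b\<bar> \<le> norm a * norm b" by (rule Cauchy_Schwarz_ineq2)
  moreover have "2 * (norm a * norm b) \<le> (norm a)^2 + (norm b)^2"
    using sum_squares_bound[of "norm a" "norm b"] by simp
  ultimately show ?thesis by simp
qed

lemma cpl_int:
  fixes p q :: "'a::euclidean_space measure"
  assumes p: "p \<in> P2" and q: "q \<in> P2" and pi: "\<pi> \<in> Cpl p q"
  shows "integrable \<pi> (\<lambda>z. fst z \<bullet> snd z)"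
    "(\<integral>z. fst z \<bullet> snd z \<partial>\<pi>) \<le> ((\<integral>y. (norm y)^2 \<partial>p) + (\<integral>y. (norm y)^2 \<partial>q)) / 2"
proof -
  have S: "sets \<pi> = sets (borel :: ('a \<times> 'a) measure)" and df: "distr \<pi> borel fst = p" and ds: "distr \<pi> borel snd = q"
    using pi by (auto simp: Cpl_def)
  have fm: "fst \<in> measurable \<pi> borel" using fst_meas by (simp add: measurable_cong_sets[OF S refl])
  have sm: "snd \<in> measurable \<pi> borel" using snd_meas by (simp add: measurable_cong_sets[OF S refl])
  have ip: "integrable p (\<lambda>y. (norm y)^2)" using p by (simp add: P2_def)
  have iq: "integrable q (\<lambda>y. (norm y)^2)" using q by (simp add: P2_def)
  have i1: "integrable \<pi> (\<lambda>z. (norm (fst z))^2)"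
    using ip integrable_distr_eq[OF fm, of "\<lambda>y. (norm y)^2"] df by simp
  have i2: "integrable \<pi> (\<lambda>z. (norm (snd z))^2)"
    using iq integrable_distr_eq[OF sm, of "\<lambda>y. (norm y)^2"] ds by simp
  have e1: "(\<integral>z. (norm (fst z))^2 \<partial>\<pi>) = (\<integral>y. (norm y)^2 \<partial>p)"
    using integral_distr[OF fm, of "\<lambda>y. (norm y)^2"] df by simp
  have e2: "(\<integral>z. (norm (snd z))^2 \<partial>\<pi>) = (\<integral>y. (norm y)^2 \<partial>q)"
    using integral_distr[OF sm, of "\<lambda>y. (norm y)^2"] ds by simp
  have ib: "integrable \<pi> (\<lambda>z. ((norm (fst z))^2 + (norm (snd z))^2) / 2)"
    using i1 i2 by simp
  have mm: "(\<lambda>z. fst z \<bullet> snd z) \<in> borel_measurable \<pi>"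
    using fm sm by (intro borel_measurable_inner) 
  show ii: "integrable \<pi> (\<lambda>z. fst z \<bullet> snd z)"
  proof (rule Bochner_Integration.integrable_bound[OF ib mm])
    have "norm (fst z \<bullet> snd z) \<le> norm (((norm (fst z))^2 + (norm (snd z))^2) / 2)" for z :: "'a \<times> 'a"
      using ineq_aux[of "fst z" "snd z"] by simp
    then show "AE x in \<pi>. norm (fst x \<bullet> snd x) \<le> norm (((norm (fst x))^2 + (norm (snd x))^2) / 2)"
      by simp
  qed
  have "(\<integral>z. fst z \<bullet> snd z \<partial>\<pi>) \<le> (\<integral>z. ((norm (fst z))^2 + (norm (snd z))^2) / 2 \<partial>\<pi>)"
    using ii ib by (rule integral_mono) (metis abs_le_D1 ineq_aux)
  also have "\<dots> = ((\<integral>y. (norm y)^2 \<partial>p) + (\<integral>y. (norm y)^2 \<partial>q)) / 2"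
    using i1 i2 e1 e2 by simp
  finally show "(\<integral>z. fst z \<bullet> snd z \<partial>\<pi>) \<le> ((\<integral>y. (norm y)^2 \<partial>p) + (\<integral>y. (norm y)^2 \<partial>q)) / 2" .
qed


lemma prod_cpl:
  fixes p q :: "'a::euclidean_space measure"
  assumes p: "p \<in> P2" and q: "q \<in> P2"
  shows "p \<Otimes>\<^sub>M q \<in> Cpl p q"
proof -
  have P: "prob_space p" "sets p = sets borel" and Q: "prob_space q" "sets q = sets borel"
    using p q by (auto simp: P2_def)
  interpret Q: prob_space q by (rule Q(1))
  interpret PP: prob_space p by (rule P(1))
  have S: "sets (p \<Otimes>\<^sub>M q) = sets (borel :: ('a \<times> 'a) measure)"
    using sets_pair_measure_cong[OF P(2) Q(2)] borel_prod by metis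
  have fm: "fst \<in> measurable (p \<Otimes>\<^sub>M q) borel" using fst_meas by (simp add: measurable_cong_sets[OF S refl])
  have sm: "snd \<in> measurable (p \<Otimes>\<^sub>M q) borel" using snd_meas by (simp add: measurable_cong_sets[OF S refl])
  have d1: "distr (p \<Otimes>\<^sub>M q) borel fst = p"
  proof -
    have "distr (p \<Otimes>\<^sub>M q) borel fst = distr (p \<Otimes>\<^sub>M q) p fst"
      using P(2) by (intro distr_cong) auto
    also have "\<dots> = p" by (rule Q.distr_pair_fst)
    finally show ?thesis .
  qed
  have d2: "distr (p \<Otimes>\<^sub>M q) borel snd = q"
  proof (rule measure_eqI)
    show "sets (distr (p \<Otimes>\<^sub>M q) borel snd) = sets q" using Q(2) by simp
    fix A assume "A \<in> sets (distr (p \<Otimes>\<^sub>M q) borel snd)"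
    then have A: "A \<in> sets borel" by simp
    then have Aq: "A \<in> sets q" using Q(2) by simp
    have "snd -` A \<inter> space (p \<Otimes>\<^sub>M q) = space p \<times> A"
      using sets.sets_into_space[OF Aq] by (auto simp: space_pair_measure)
    then show "emeasure (distr (p \<Otimes>\<^sub>M q) borel snd) A = emeasure q A"
      using A Aq by (simp add: emeasure_distr[OF sm A] Q.emeasure_pair_measure_Times PP.emeasure_space_1)
  qed
  show ?thesis
    unfolding Cpl_def using S d1 d2 prob_space_pair[OF P(1) Q(1)] by simp
qed

lemma cpl_mix:
  fixes p0 p1 q :: "'a::euclidean_space measure"
  assumes p0: "p0 \<in> P2" and p1: "p1 \<in> P2" and q: "q \<in> P2"
    and c0: "\<pi>0 \<in> Cpl p0 q" and c1: "\<pi>1 \<in> Cpl p1 q" and t: "0 \<le> t" "t \<le> 1"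
  shows "mixm t \<pi>0 \<pi>1 \<in> Cpl (mixm t p0 p1) q"
    "(\<integral>z. fst z \<bullet> snd z \<partial>mixm t \<pi>0 \<pi>1) = (\<integral>z. fst z \<bullet> snd z \<partial>\<pi>1) * t + (\<integral>z. fst z \<bullet> snd z \<partial>\<pi>0) * (1 - t)"
proof -
  have C0: "prob_space \<pi>0" "sets \<pi>0 = sets (borel :: ('a \<times> 'a) measure)" "distr \<pi>0 borel fst = p0" "distr \<pi>0 borel snd = q"
    using c0 by (auto simp: Cpl_def)
  have C1: "prob_space \<pi>1" "sets \<pi>1 = sets (borel :: ('a \<times> 'a) measure)" "distr \<pi>1 borel fst = p1" "distr \<pi>1 borel snd = q"
    using c1 by (auto simp: Cpl_def)
  interpret mixloc \<pi>0 \<pi>1 t using C0 C1 t by (intro mixlocI) simp_all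
  have fm: "fst \<in> measurable \<pi>0 borel" using fst_meas by (simp add: measurable_cong_sets[OF C0(2) refl])
  have sm: "snd \<in> measurable \<pi>0 borel" using snd_meas by (simp add: measurable_cong_sets[OF C0(2) refl])
  show "mixm t \<pi>0 \<pi>1 \<in> Cpl (mixm t p0 p1) q"
  proof -
    have "prob_space q" using q by (simp add: P2_def)
    then have "mixm t q q = q" using mix_same t by blast
    then show ?thesis
      unfolding Cpl_def using prob_mix C0 C1 distr_mix[OF fm] distr_mix[OF sm] by simp
  qed
  show "(\<integral>z. fst z \<bullet> snd z \<partial>mixm t \<pi>0 \<pi>1) = (\<integral>z. fst z \<bullet> snd z \<partial>\<pi>1) * t + (\<integral>z. fst z \<bullet> snd z \<partial>\<pi>0) * (1 - t)"
    using cpl_int(1)[OF p0 q c0] cpl_int(1)[OF p1 q c1] by (rule integral_mix)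
qed

lemma mcov_facts:
  fixes p q :: "'a::euclidean_space measure"
  assumes p: "p \<in> P2" and q: "q \<in> P2"
  shows "Cpl p q \<noteq> {}" "bdd_above ((\<lambda>\<pi>. \<integral>yz. fst yz \<bullet> snd yz \<partial>\<pi>) ` Cpl p q)"
    "\<pi> \<in> Cpl p q \<Longrightarrow> (\<integral>yz. fst yz \<bullet> snd yz \<partial>\<pi>) \<le> MCov p q"
proof -
  show ne: "Cpl p q \<noteq> {}" using prod_cpl[OF p q] by auto
  show bd: "bdd_above ((\<lambda>\<pi>. \<integral>yz. fst yz \<bullet> snd yz \<partial>\<pi>) ` Cpl p q)"
    using cpl_int(2)[OF p q] by (intro bdd_aboveI2) 
  show "\<pi> \<in> Cpl p q \<Longrightarrow> (\<integral>yz. fst yz \<bullet> snd yz \<partial>\<pi>) \<le> MCov p q"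
    unfolding MCov_def using bd by (intro cSup_upper) auto
qed

lemma mcov_mix:
  fixes p0 p1 q :: "'a::euclidean_space measure"
  assumes p0: "p0 \<in> P2x x" and p1: "p1 \<in> P2x y" and q: "q \<in> P2" and t: "0 < t" "t < 1"
  shows "MCov p1 q * t + MCov p0 q * (1 - t) \<le> MCov (mixm t p0 p1) q"
proof -
  have P0: "p0 \<in> P2" and P1: "p1 \<in> P2" using p0 p1 by (auto simp: P2x_def)
  have Pm: "mixm t p0 p1 \<in> P2" using mix_P2x[OF p0 p1] t by (auto simp: P2x_def)
  let ?I = "\<lambda>\<pi>. \<integral>yz. fst yz \<bullet> snd yz \<partial>\<pi>"
  let ?MC = "MCov (mixm t p0 p1) q"
  have key: "?I \<pi>1 * t + ?I \<pi>0 * (1 - t) \<le> ?MC" if c0: "\<pi>0 \<in> Cpl p0 q" and c1: "\<pi>1 \<in> Cpl p1 q" for \<pi>0 \<pi>1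
  proof -
    have t': "0 \<le> t" "t \<le> 1" using t by auto
    show ?thesis
      using cpl_mix(2)[OF P0 P1 q c0 c1 t'] mcov_facts(3)[OF Pm q cpl_mix(1)[OF P0 P1 q c0 c1 t']] by simp
  qed
  have step: "?I \<pi>1 * t + MCov p0 q * (1 - t) \<le> ?MC" if c1: "\<pi>1 \<in> Cpl p1 q" for \<pi>1
  proof -
    have "MCov p0 q \<le> (?MC - ?I \<pi>1 * t) / (1 - t)"
      unfolding MCov_def[of p0]
    proof (rule cSup_least)
      show "?I ` Cpl p0 q \<noteq> {}" using mcov_facts(1)[OF P0 q] by simp
      fix v assume "v \<in> ?I ` Cpl p0 q"
      then obtain \<pi>0 where c0: "\<pi>0 \<in> Cpl p0 q" and v: "v = ?I \<pi>0" by auto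
      show "v \<le> (?MC - ?I \<pi>1 * t) / (1 - t)"
        using key[OF c0 c1] t v by (simp add: field_simps)
    qed
    then show ?thesis using t by (simp add: field_simps)
  qed
  have "MCov p1 q \<le> (?MC - MCov p0 q * (1 - t)) / t"
    unfolding MCov_def[of p1]
  proof (rule cSup_least)
    show "?I ` Cpl p1 q \<noteq> {}" using mcov_facts(1)[OF P1 q] by simp
    fix v assume "v \<in> ?I ` Cpl p1 q"
    then obtain \<pi>1 where c1: "\<pi>1 \<in> Cpl p1 q" and v: "v = ?I \<pi>1" by auto
    show "v \<le> (?MC - MCov p0 q * (1 - t)) / t"
      using step[OF c1] t v by (simp add: field_simps)
  qed
  then show ?thesis using t by (simp add: field_simps)
qed

lemma ereal_aux1:
  fixes A0 A1 B0 B1 :: ennreal and t :: real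
  assumes t: "0 < t" "t < 1"
  shows "enn2ereal (A1 * ennreal t + A0 * ennreal (1 - t)) - enn2ereal (B1 * ennreal t + B0 * ennreal (1 - t))
    \<le> ereal (1 - t) * (enn2ereal A0 - enn2ereal B0) + ereal t * (enn2ereal A1 - enn2ereal B1)"
  using t
  by (cases A0 rule: ennreal_cases; cases A1 rule: ennreal_cases; cases B0 rule: ennreal_cases; cases B1 rule: ennreal_cases)
     (simp_all add: ennreal_mult_top ennreal_top_mult ennreal_mult[symmetric] ennreal_plus[symmetric] del: ennreal_plus, simp_all add: algebra_simps)

lemma ereal_aux2:
  fixes E0 E1 :: ereal and t M0 M1 :: real
  assumes t: "0 < t" "t < 1"
  shows "ereal (1 - t) * E0 + ereal t * E1 - ereal (M1 * t + M0 * (1 - t))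
    \<le> ereal (1 - t) * (E0 - ereal M0) + ereal t * (E1 - ereal M1)"
  using t
  by (cases E0 rule: ereal_cases; cases E1 rule: ereal_cases) (simp_all add: algebra_simps)


lemma inf_comb:
  fixes c :: ereal and f :: "'i \<Rightarrow> ereal" and g :: "'j \<Rightarrow> ereal" and t :: real
  assumes t: "0 < t" "t < 1"
    and H: "\<And>i j. i \<in> I \<Longrightarrow> j \<in> J \<Longrightarrow> c \<le> ereal (1 - t) * f i + ereal t * g j"
  shows "c \<le> ereal (1 - t) * (INF i\<in>I. f i) + ereal t * (INF j\<in>J. g j)"
proof -
  define F where "F = (INF i\<in>I. f i)"
  define G where "G = (INF j\<in>J. g j)"
  have R: "c \<le> ereal ((1 - t) * r0 + t * r1)" if r0: "F < ereal r0" and r1: "G < ereal r1" for r0 r1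
  proof -
    obtain i where i: "i \<in> I" "f i < ereal r0" using r0 unfolding F_def by (auto simp: INF_less_iff)
    obtain j where j: "j \<in> J" "g j < ereal r1" using r1 unfolding G_def by (auto simp: INF_less_iff)
    have "ereal (1 - t) * f i \<le> ereal (1 - t) * ereal r0"
      using i t by (intro ereal_mult_left_mono) auto
    moreover have "ereal t * g j \<le> ereal t * ereal r1"
      using j t by (intro ereal_mult_left_mono) auto
    ultimately have "ereal (1 - t) * f i + ereal t * g j \<le> ereal ((1 - t) * r0 + t * r1)"
      using add_mono by fastforce
    then show ?thesis using H[OF i(1) j(1)] by simp
  qed
  have "c \<le> ereal (1 - t) * F + ereal t * G"
  proof (cases F rule: ereal_cases)
    case (real u)
    show ?thesis
    proof (cases G rule: ereal_cases)
      case (real w)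
      show ?thesis
      proof (rule ereal_le_epsilon2)
        fix e :: real assume e: "0 < e"
        have "c \<le> ereal ((1 - t) * (u + e) + t * (w + e))"
          using \<open>F = ereal u\<close> \<open>G = ereal w\<close> e by (intro R) auto
        then show "c \<le> ereal (1 - t) * F + ereal t * G + ereal e"
          using \<open>F = ereal u\<close> \<open>G = ereal w\<close> by (simp add: algebra_simps)
      qed
    next
      case PInf
      show ?thesis using t \<open>G = \<infinity>\<close> \<open>F = ereal u\<close> by simp
    next
      case MInf
      have "c = -\<infinity>"
      proof (rule ereal_bot)
        fix B :: real
        have "c \<le> ereal ((1 - t) * (u + 1) + t * ((B - (1 - t) * (u + 1)) / t))"
          using \<open>F = ereal u\<close> \<open>G = -\<infinity>\<close> by (intro R) auto
        then show "c \<le> ereal B" using t by simp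
      qed
      then show ?thesis by simp
    qed
  next
    case PInf
    then show ?thesis using t by (cases G rule: ereal_cases) simp_all
  next
    case MInf
    show ?thesis
    proof (cases "G = \<infinity>")
      case True then show ?thesis using t by (cases F rule: ereal_cases) simp_all
    next
      case False
      have "\<exists>w. G < ereal w"
      proof (cases G)
        case (real r) then show ?thesis by (intro exI[of _ "r+1"]) simp
      qed (use False in auto)
      then obtain w where w: "G < ereal w" by blast
      have "c = -\<infinity>"
      proof (rule ereal_bot)
        fix B :: real
        have "c \<le> ereal ((1 - t) * ((B - t * w) / (1 - t)) + t * w)"
          using \<open>F = -\<infinity>\<close> w by (intro R) auto
        then show "c \<le> ereal B" using t by simp
      qed
      then show ?thesis by simp
    qed
  qed
  then show ?thesis by (simp add: F_def G_def)
qed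

lemma lsc_open:
  fixes f :: "'a::topological_space \<Rightarrow> ereal"
  assumes "ext_lsc f"
  shows "open {x. a < f x}"
proof (subst open_subopen, intro ballI)
  fix x assume "x \<in> {x. a < f x}"
  then have ax: "a < f x" by simp
  have "f x \<le> Liminf (at x) f" using assms by (simp add: ext_lsc_def)
  then have "eventually (\<lambda>y. a < f y) (at x)"
    using ax by (simp add: le_Liminf_iff)
  then obtain S where S: "open S" "x \<in> S" "\<forall>y\<in>S. y \<noteq> x \<longrightarrow> a < f y"
    unfolding eventually_at_topological by auto
  then show "\<exists>T. open T \<and> x \<in> T \<and> T \<subseteq> {x. a < f x}"
    using ax by (intro exI[of _ S]) auto
qed

lemma lsc_meas:
  fixes f :: "'a::euclidean_space \<Rightarrow> ereal"
  assumes "ext_lsc f"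
  shows "f \<in> borel_measurable borel"
  unfolding borel_measurable_ereal_iff_Ioi
proof
  fix a
  have "f -` {a<..} \<inter> space borel = {x. a < f x}" by auto
  then show "f -` {a<..} \<inter> space borel \<in> sets borel"
    using lsc_open[OF assms] by simp
qed


lemma ext_int_mix:
  fixes \<psi> :: "'a::euclidean_space \<Rightarrow> ereal"
  assumes p0: "p0 \<in> P2" and p1: "p1 \<in> P2" and t: "0 < t" "t < 1"
    and m: "\<psi> \<in> borel_measurable borel"
  shows "ext_integral (mixm t p0 p1) \<psi> \<le> ereal (1 - t) * ext_integral p0 \<psi> + ereal t * ext_integral p1 \<psi>"
proof -
  have P0: "prob_space p0" "sets p0 = sets borel" and P1: "prob_space p1" "sets p1 = sets borel"
    using p0 p1 by (auto simp: P2_def)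
  interpret mixloc p0 p1 t using P0 P1 t by (intro mixlocI) simp_all
  have m1: "(\<lambda>x. e2ennreal (\<psi> x)) \<in> borel_measurable p0"
    using m by (simp add: measurable_cong_sets[OF P0(2) refl])
  have m2: "(\<lambda>x. e2ennreal (- \<psi> x)) \<in> borel_measurable p0"
    using m by (simp add: measurable_cong_sets[OF P0(2) refl])
  show ?thesis
    unfolding ext_integral_def nn_integral_mix[OF m1] nn_integral_mix[OF m2]
    using t by (rule ereal_aux1)
qed

definition vfun :: "('a::euclidean_space \<Rightarrow> ereal) \<Rightarrow> 'a measure \<Rightarrow> 'a measure \<Rightarrow> ereal" where
  "vfun \<psi> q p = ext_integral p \<psi> - ereal (MCov p q)"

lemma val_mix:
  fixes \<psi> :: "'a::euclidean_space \<Rightarrow> ereal"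
  assumes p0: "p0 \<in> P2x x" and p1: "p1 \<in> P2x y" and q: "q \<in> P2" and t: "0 < t" "t < 1"
    and m: "\<psi> \<in> borel_measurable borel"
  shows "vfun \<psi> q (mixm t p0 p1) \<le> ereal (1 - t) * vfun \<psi> q p0 + ereal t * vfun \<psi> q p1"
proof -
  have P0: "p0 \<in> P2" and P1: "p1 \<in> P2" using p0 p1 by (auto simp: P2x_def)
  have "vfun \<psi> q (mixm t p0 p1) \<le> ereal (1 - t) * ext_integral p0 \<psi> + ereal t * ext_integral p1 \<psi>
      - ereal (MCov p1 q * t + MCov p0 q * (1 - t))"
    unfolding vfun_def
    by (rule ereal_minus_mono) (use ext_int_mix[OF P0 P1 t m] mcov_mix[OF p0 p1 q t] in auto)
  also have "\<dots> \<le> ereal (1 - t) * vfun \<psi> q p0 + ereal t * vfun \<psi> q p1"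
    unfolding vfun_def using t by (rule ereal_aux2)
  finally show ?thesis .
qed

lemma phi_conv:
  fixes \<psi> :: "'a::euclidean_space \<Rightarrow> ereal"
  assumes q: "q \<in> P2" and t: "0 < t" "t < 1" and m: "\<psi> \<in> borel_measurable borel"
  shows "phi \<psi> q ((1 - t) *\<^sub>R x + t *\<^sub>R y) \<le> ereal (1 - t) * phi \<psi> q x + ereal t * phi \<psi> q y"
proof -
  have "phi \<psi> q ((1 - t) *\<^sub>R x + t *\<^sub>R y) \<le> ereal (1 - t) * (INF p\<in>P2x x. vfun \<psi> q p) + ereal t * (INF p\<in>P2x y. vfun \<psi> q p)"
  proof (rule inf_comb[OF t])
    fix p0 p1 assume p0: "p0 \<in> P2x x" and p1: "p1 \<in> P2x y"
    have "mixm t p0 p1 \<in> P2x ((1 - t) *\<^sub>R x + t *\<^sub>R y)" using mix_P2x[OF p0 p1] t by simp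
    then have "phi \<psi> q ((1 - t) *\<^sub>R x + t *\<^sub>R y) \<le> vfun \<psi> q (mixm t p0 p1)"
      unfolding phi_def vfun_def by (rule INF_lower)
    also have "\<dots> \<le> ereal (1 - t) * vfun \<psi> q p0 + ereal t * vfun \<psi> q p1"
      by (rule val_mix[OF p0 p1 q t m])
    finally show "phi \<psi> q ((1 - t) *\<^sub>R x + t *\<^sub>R y) \<le> ereal (1 - t) * vfun \<psi> q p0 + ereal t * vfun \<psi> q p1" .
  qed
  then show ?thesis by (simp add: phi_def vfun_def)
qed

lemma return_P2x:
  fixes y :: "'a::euclidean_space"
  shows "return borel y \<in> P2x y"
proof -
  have sp: "y \<in> space borel" by simp
  have m1: "(\<lambda>z::'a. (norm z)^2) \<in> borel_measurable borel" by measurable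
  have m2: "(\<lambda>z::'a. z) \<in> borel_measurable borel" by measurable
  have n1: "(\<lambda>z::'a. ennreal (norm ((norm z)^2))) \<in> borel_measurable borel" by measurable
  have n2: "(\<lambda>z::'a. ennreal (norm z)) \<in> borel_measurable borel" by measurable
  have i1: "integrable (return borel y) (\<lambda>z. (norm z)^2)"
    unfolding integrable_iff_bounded nn_integral_return[OF sp n1] using m1 by simp
  have i2: "integrable (return borel y) (\<lambda>z. z)"
    unfolding integrable_iff_bounded nn_integral_return[OF sp n2] using m2 by simp
  have e: "(\<integral>z. z \<partial>return borel y) = y" by (rule integral_return[OF sp m2])
  show ?thesis
    unfolding P2x_def P2_def using i1 i2 e prob_space_return[OF sp] by simp
qed

lemma phi_fin:
  fixes \<psi> :: "'a::euclidean_space \<Rightarrow> ereal"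
  assumes "y \<in> edom \<psi>" and m: "\<psi> \<in> borel_measurable borel"
  shows "phi \<psi> q y < \<infinity>"
proof -
  have "phi \<psi> q y \<le> ext_integral (return borel y) \<psi> - ereal (MCov (return borel y) q)"
    unfolding phi_def using return_P2x by (rule INF_lower)
  also have "ext_integral (return borel y) \<psi> = enn2ereal (e2ennreal (\<psi> y)) - enn2ereal (e2ennreal (- \<psi> y))"
  proof -
    have sp: "y \<in> space borel" by simp
    have n1: "(\<lambda>z. e2ennreal (\<psi> z)) \<in> borel_measurable borel" using m by measurable
    have n2: "(\<lambda>z. e2ennreal (- \<psi> z)) \<in> borel_measurable borel" using m by measurable
    show ?thesis unfolding ext_integral_def nn_integral_return[OF sp n1] nn_integral_return[OF sp n2] ..
  qed
  finally have le: "phi \<psi> q y \<le> enn2ereal (e2ennreal (\<psi> y)) - enn2ereal (e2ennreal (- \<psi> y)) - ereal (MCov (return borel y) q)" .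
  have "\<psi> y < \<infinity>" using assms by (simp add: edom_def)
  then have "enn2ereal (e2ennreal (\<psi> y)) < \<infinity>"
    by (cases "\<psi> y") (simp_all add: e2ennreal_ereal e2ennreal_neg)
  then have "enn2ereal (e2ennreal (\<psi> y)) - enn2ereal (e2ennreal (- \<psi> y)) - ereal (MCov (return borel y) q) < \<infinity>"
  proof -
    have "enn2ereal (e2ennreal (\<psi> y)) - enn2ereal (e2ennreal (- \<psi> y)) \<le> enn2ereal (e2ennreal (\<psi> y))"
      by (rule ereal_diff_le_self) simp
    then have "enn2ereal (e2ennreal (\<psi> y)) - enn2ereal (e2ennreal (- \<psi> y)) < \<infinity>"
      using \<open>enn2ereal (e2ennreal (\<psi> y)) < \<infinity>\<close> by (rule le_less_trans)
    then show ?thesis by (cases "enn2ereal (e2ennreal (\<psi> y)) - enn2ereal (e2ennreal (- \<psi> y))") simp_all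
  qed
  with le show ?thesis by (rule le_less_trans)
qed


theorem lemma3p1:
  fixes q :: "'a::euclidean_space measure" and \<psi> :: "'a \<Rightarrow> ereal"
  assumes "q \<in> P2" and "no_mass_small_sets q"
    and "\<forall>x. \<psi> x > -\<infinity>" and "edom \<psi> \<noteq> {}" and "ext_lsc \<psi>" and "ext_convex \<psi>"
  shows "ext_convex_on (edom \<psi>) (phi \<psi> q) \<and>
         ((\<exists>x\<in>interior (edom \<psi>). phi \<psi> q x > -\<infinity>) \<longrightarrow>
           (\<forall>x\<in>interior (edom \<psi>). phi \<psi> q x > -\<infinity>))"
proof -
  have m: "\<psi> \<in> borel_measurable borel" using lsc_meas assms(5) by blast
  have q: "q \<in> P2" by (rule assms(1))
  have convS: "convex (edom \<psi>)"
    unfolding convex_def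
  proof (intro ballI allI impI)
    fix x y :: 'a and u v :: real
    assume x: "x \<in> edom \<psi>" and y: "y \<in> edom \<psi>" and u: "0 \<le> u" and v: "0 \<le> v" and uv: "u + v = 1"
    show "u *\<^sub>R x + v *\<^sub>R y \<in> edom \<psi>"
    proof (cases "v = 0 \<or> v = 1")
      case True
      then show ?thesis using x y uv by auto
    next
      case False
      then have v01: "0 < v" "v < 1" using v uv u by auto
      have uu: "u = 1 - v" using uv by simp
      have "\<psi> ((1 - v) *\<^sub>R x + v *\<^sub>R y) \<le> ereal (1 - v) * \<psi> x + ereal v * \<psi> y"
        using assms(6) v01 unfolding ext_convex_def by blast
      moreover have "ereal (1 - v) * \<psi> x + ereal v * \<psi> y < \<infinity>"
        using x y v01 unfolding edom_def
        by (cases "\<psi> x"; cases "\<psi> y") simp_all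
      ultimately have "\<psi> ((1 - v) *\<^sub>R x + v *\<^sub>R y) < \<infinity>" by (rule le_less_trans)
      then show ?thesis unfolding uu edom_def by simp
    qed
  qed
  have epi: "convex {(x, t::real). x \<in> edom \<psi> \<and> phi \<psi> q x \<le> ereal t}"
    unfolding convex_def
  proof (intro ballI allI impI)
    fix a b :: "'a \<times> real" and u v :: real
    assume a: "a \<in> {(x, t::real). x \<in> edom \<psi> \<and> phi \<psi> q x \<le> ereal t}"
      and b: "b \<in> {(x, t::real). x \<in> edom \<psi> \<and> phi \<psi> q x \<le> ereal t}"
      and u: "0 \<le> u" and v: "0 \<le> v" and uv: "u + v = 1"
    obtain x s where as: "a = (x, s)" by (cases a)
    obtain y r where br: "b = (y, r)" by (cases b)
    have x: "x \<in> edom \<psi>" and xs: "phi \<psi> q x \<le> ereal s" using a as by auto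
    have y: "y \<in> edom \<psi>" and yr: "phi \<psi> q y \<le> ereal r" using b br by auto
    have eq: "u *\<^sub>R a + v *\<^sub>R b = (u *\<^sub>R x + v *\<^sub>R y, u * s + v * r)" using as br by simp
    have mem: "u *\<^sub>R x + v *\<^sub>R y \<in> edom \<psi>"
      using convS x y u v uv unfolding convex_def by blast
    have "phi \<psi> q (u *\<^sub>R x + v *\<^sub>R y) \<le> ereal (u * s + v * r)"
    proof (cases "v = 0 \<or> v = 1")
      case True
      then show ?thesis using xs yr uv by auto
    next
      case False
      then have v01: "0 < v" "v < 1" using v uv u by auto
      have uu: "u = 1 - v" using uv by simp
      have "phi \<psi> q ((1 - v) *\<^sub>R x + v *\<^sub>R y) \<le> ereal (1 - v) * phi \<psi> q x + ereal v * phi \<psi> q y"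
        by (rule phi_conv[OF q v01 m])
      also have "\<dots> \<le> ereal (1 - v) * ereal s + ereal v * ereal r"
        using xs yr v01 by (intro add_mono ereal_mult_left_mono) auto
      also have "\<dots> = ereal ((1 - v) * s + v * r)" by simp
      finally show ?thesis unfolding uu .
    qed
    then show "u *\<^sub>R a + v *\<^sub>R b \<in> {(x, t::real). x \<in> edom \<psi> \<and> phi \<psi> q x \<le> ereal t}"
      unfolding eq using mem by simp
  qed
  have part2: "\<forall>x\<in>interior (edom \<psi>). phi \<psi> q x > -\<infinity>"
    if ex: "\<exists>x\<in>interior (edom \<psi>). phi \<psi> q x > -\<infinity>"
  proof
    obtain x0 where x0: "x0 \<in> interior (edom \<psi>)" and f0: "phi \<psi> q x0 > -\<infinity>" using ex by blast
    fix x1 assume x1: "x1 \<in> interior (edom \<psi>)"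
    show "phi \<psi> q x1 > -\<infinity>"
    proof (rule ccontr)
      assume "\<not> phi \<psi> q x1 > -\<infinity>"
      then have f1: "phi \<psi> q x1 = -\<infinity>" by (simp add: not_less)
      then have ne: "x1 \<noteq> x0" using f0 by auto
      obtain e where e: "e > 0" "ball x0 e \<subseteq> interior (edom \<psi>)"
        using x0 open_interior open_contains_ball by blast
      define n where "n = norm (x0 - x1)"
      have n: "n > 0" using ne by (simp add: n_def)
      define d where "d = e / (2 * n)"
      have d: "d > 0" using e n by (simp add: d_def)
      define yv where "yv = x0 + d *\<^sub>R (x0 - x1)"
      have "dist x0 yv = d * n" using d by (simp add: yv_def n_def dist_norm)
      also have "\<dots> = e / 2" using n by (simp add: d_def)
      finally have "yv \<in> ball x0 e" using e by simp
      then have yv: "yv \<in> edom \<psi>" using e interior_subset by blast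
      define t where "t = 1 / (1 + d)"
      have t: "0 < t" "t < 1" using d by (auto simp: t_def)
      have omt: "1 - t = d * t" using d by (simp add: t_def field_simps)
      have "(1 - t) *\<^sub>R x1 + t *\<^sub>R yv = t *\<^sub>R ((1 + d) *\<^sub>R x0)"
        unfolding omt yv_def by (simp add: algebra_simps)
      also have "\<dots> = x0" using d by (simp add: t_def)
      finally have comb: "(1 - t) *\<^sub>R x1 + t *\<^sub>R yv = x0" .
      have "phi \<psi> q x0 \<le> ereal (1 - t) * phi \<psi> q x1 + ereal t * phi \<psi> q yv"
        using phi_conv[OF q t m, of x1 yv] comb by simp
      also have "\<dots> = -\<infinity>"
      proof -
        have "phi \<psi> q yv < \<infinity>" by (rule phi_fin[OF yv m])
        then have h2: "ereal t * phi \<psi> q yv \<noteq> \<infinity>" using t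
          by (cases "phi \<psi> q yv") simp_all
        have h1: "ereal (1 - t) * phi \<psi> q x1 = -\<infinity>" using f1 t by simp
        have h3: "-\<infinity> + z = -\<infinity>" if "z \<noteq> \<infinity>" for z :: ereal
          using that by (cases z) simp_all
        show ?thesis unfolding h1 by (rule h3[OF h2])
      qed
      finally show False using f0 by simp
    qed
  qed
  show ?thesis
    using convS epi part2 unfolding ext_convex_on_def by blast
qed

end
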